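(* Let $D_1,\dots,D_n$ be semi-interlaced polytopes in a finite set $\mathbf P\subset\mathbb Z^n$ with $P=\operatorname{Conv}\mathbf P$, and let $S$ be a suture. Then exactly $\dim S$ of the $D_i$ meet $S$. The polytopes $\{D_i\cap S\mid D_i\cap S\neq\emptyset\}$ are semi-interlaced in $\mathbf P\cap S$, viewed inside $\operatorname{aff}(S)$ with the lattice $\mathbb Z^n\cap\operatorname{aff}(S)$. That is: - each of them is a daughter polytope of $\mathbf P\cap S$; - every face $F$ of $S$ meets at least $\dim F$ of them.
   Context: **Daughter polytope.** For a nonempty polytope $D$ with vertices in a finite set $\mathbf Q$, let $\mathcal D(D)$ be the set of inclusion-maximal faces of $\operatorname{Conv}\mathbf Q$ disjoint from $D$. $D$ is a daughter polytope of $\mathbf Q$ if: 1. distinct members of $\mathcal D(D)$ are disjoint; 2. $D=\operatorname{Conv}(\mathbf Q\setminus\bigcup_{G\in\mathcal D(D)}G)$. **Semi-interlaced and sutures.** Daughter polytopes $D_1,\dots,D_n$ of $\mathbf P\subset\mathbb Z^n$ are semi-interlaced in $\mathbf P$ if every face $F$ of $P$ meets at least $\dim F$ of them. A suture is a face of $P$ meeting exactly $\dim F$ of them. *)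

theory Defs
  imports "HOL-Analysis.Analysis"
begin

definition maximal_disjoint_faces :: "('a::euclidean_space) set \<Rightarrow> 'a set \<Rightarrow> 'a set set" where
  "maximal_disjoint_faces Q D =
     {G. G face_of convex hull Q \<and> G \<inter> D = {} \<and>
         (\<forall>G'. G' face_of convex hull Q \<and> G' \<inter> D = {} \<and> G \<subseteq> G' \<longrightarrow> G' = G)}"

definition daughter_polytope :: "('a::euclidean_space) set \<Rightarrow> 'a set \<Rightarrow> bool" where
  "daughter_polytope Q D \<longleftrightarrow>
     D \<noteq> {} \<and> (\<exists>V. V \<subseteq> Q \<and> D = convex hull V) \<and>
     (\<forall>G\<in>maximal_disjoint_faces Q D. \<forall>G'\<in>maximal_disjoint_faces Q D. G \<noteq> G' \<longrightarrow> G \<inter> G' = {}) \<and>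
     D = convex hull (Q - \<Union>(maximal_disjoint_faces Q D))"

definition semi_interlaced :: "('a::euclidean_space) set \<Rightarrow> 'i set \<Rightarrow> ('i \<Rightarrow> 'a set) \<Rightarrow> bool" where
  "semi_interlaced Q I D \<longleftrightarrow>
     (\<forall>i\<in>I. daughter_polytope Q (D i)) \<and>
     (\<forall>F. F face_of convex hull Q \<longrightarrow> aff_dim F \<le> int (card {i\<in>I. D i \<inter> F \<noteq> {}}))"

definition suture :: "('a::euclidean_space) set \<Rightarrow> 'i set \<Rightarrow> ('i \<Rightarrow> 'a set) \<Rightarrow> 'a set \<Rightarrow> bool" where
  "suture Q I D S \<longleftrightarrow>
     S face_of convex hull Q \<and> int (card {i\<in>I. D i \<inter> S \<noteq> {}}) = aff_dim S"

definition lattice_points :: "(real^'n) set" where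
  "lattice_points = {x. \<forall>k. x $ k \<in> \<int>}"

end

theory Submission
  imports Defs
begin

lemma face_hull_pts:
  fixes V :: "'a::euclidean_space set"
  assumes "finite V" "T face_of convex hull V"
  shows "T = convex hull (V \<inter> T)"
proof -
  obtain S' where S': "S' \<subseteq> V" "T = convex hull S'"
    using face_of_convex_hull_subset[OF finite_imp_compact[OF assms(1)] assms(2)] by metis
  have "S' \<subseteq> convex hull S'" by (rule hull_subset)
  hence "S' \<subseteq> V \<inter> T" using S' by auto
  hence "convex hull S' \<subseteq> convex hull (V \<inter> T)" by (rule hull_mono)
  hence 1: "T \<subseteq> convex hull (V \<inter> T)" using S'(2) by simp
  have 2: "convex hull (V \<inter> T) \<subseteq> T"
    by (rule hull_minimal) (auto simp: face_of_imp_convex[OF assms(2)])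
  show ?thesis using 1 2 by (rule equalityI[OF _ _ , THEN sym, rotated]) 
qed

lemma hull_Int_face:
  fixes V :: "'a::euclidean_space set"
  assumes "finite V" "S face_of K" "convex hull V \<subseteq> K"
  shows "convex hull V \<inter> S = convex hull (V \<inter> S)"
proof -
  have cv: "convex (convex hull V)" by (rule convex_convex_hull)
  have "(S \<inter> convex hull V) face_of (K \<inter> convex hull V)"
    by (rule face_of_slice[OF assms(2) cv])
  moreover have "K \<inter> convex hull V = convex hull V" using assms(3) by (rule Int_absorb1)
  moreover have "S \<inter> convex hull V = convex hull V \<inter> S" by (rule Int_commute)
  ultimately have f: "(convex hull V \<inter> S) face_of convex hull V" by metis
  have "convex hull V \<inter> S = convex hull (V \<inter> (convex hull V \<inter> S))"
    by (rule face_hull_pts[OF assms(1) f])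
  moreover have "V \<inter> (convex hull V \<inter> S) = V \<inter> S"
    using hull_subset[of V convex] by auto
  ultimately show ?thesis by metis
qed

lemma exists_maxface:
  fixes Q :: "'a::euclidean_space set"
  assumes "finite Q" "F face_of convex hull Q" "F \<inter> D = {}"
  shows "\<exists>G\<in>maximal_disjoint_faces Q D. F \<subseteq> G"
proof -
  define A where "A = {G'. G' face_of convex hull Q \<and> G' \<inter> D = {} \<and> F \<subseteq> G'}"
  have sub: "A \<subseteq> {G. G face_of convex hull Q}" unfolding A_def by blast
  have fin: "finite A"
    by (rule finite_subset[OF sub finite_polytope_faces[OF polytope_convex_hull[OF assms(1)]]])
  have FA: "F \<in> A" unfolding A_def using assms(2,3) by blast
  obtain m where m: "m \<in> A" "\<And>b. b \<in> A \<Longrightarrow> m \<le> b \<Longrightarrow> m = b"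
    using finite_has_maximal[OF fin] FA by (metis empty_iff)
  have mA: "m face_of convex hull Q" "m \<inter> D = {}" "F \<subseteq> m" using m(1) unfolding A_def by blast+
  have "m \<in> maximal_disjoint_faces Q D"
    unfolding maximal_disjoint_faces_def
  proof (intro CollectI conjI allI impI)
    show "m face_of convex hull Q" "m \<inter> D = {}" by (rule mA(1), rule mA(2))
    fix G' assume G': "G' face_of convex hull Q \<and> G' \<inter> D = {} \<and> m \<subseteq> G'"
    have "G' \<in> A" unfolding A_def using G' mA(3) by blast
    thus "G' = m" using m(2) G' by (metis)
  qed
  thus ?thesis using mA(3) by blast
qed

lemma daughter_polytopeI:
  assumes "D \<noteq> {}" "\<exists>V. V \<subseteq> Q \<and> D = convex hull V"
    "\<forall>G\<in>maximal_disjoint_faces Q D. \<forall>G'\<in>maximal_disjoint_faces Q D. G \<noteq> G' \<longrightarrow> G \<inter> G' = {}"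
    "D = convex hull (Q - \<Union>(maximal_disjoint_faces Q D))"
  shows "daughter_polytope Q D"
  unfolding daughter_polytope_def
  by (rule conjI[OF assms(1) conjI[OF assms(2) conjI[OF assms(3) assms(4)]]])

lemma daughter_restrict:
  fixes P :: "'a::euclidean_space set"
  assumes fin: "finite P" and dp: "daughter_polytope P D" and S: "S face_of convex hull P"
    and ne: "D \<inter> S \<noteq> {}"
  shows "daughter_polytope (P \<inter> S) (D \<inter> S)"
proof -
  let ?C = "convex hull P"
  have finS: "finite (P \<inter> S)" using fin by simp
  have hS: "convex hull (P \<inter> S) = S"
    using face_hull_pts[OF fin S] by (metis Int_commute)
  have SC: "S \<subseteq> ?C" using S face_of_imp_subset by blast
  let ?M = "maximal_disjoint_faces P D"
  let ?M' = "maximal_disjoint_faces (P \<inter> S) (D \<inter> S)"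
  have Dis: "\<forall>G\<in>?M. \<forall>G'\<in>?M. G \<noteq> G' \<longrightarrow> G \<inter> G' = {}"
    by (rule conjunct1[OF conjunct2[OF conjunct2[OF dp[unfolded daughter_polytope_def]]]])
  have Deq: "D = convex hull (P - \<Union>?M)"
    by (rule conjunct2[OF conjunct2[OF conjunct2[OF dp[unfolded daughter_polytope_def]]]])
  have a: "\<exists>G\<in>?M. F = G \<inter> S" if F: "F \<in> ?M'" for F
  proof -
    have Ff: "F face_of S" "F \<inter> (D \<inter> S) = {}"
      and Fmax: "\<And>G'. G' face_of S \<Longrightarrow> G' \<inter> (D \<inter> S) = {} \<Longrightarrow> F \<subseteq> G' \<Longrightarrow> G' = F"
      using F unfolding maximal_disjoint_faces_def hS by auto
    have FC: "F face_of ?C" using face_of_trans[OF Ff(1) S] .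
    have FS: "F \<subseteq> S" using Ff(1) face_of_imp_subset by blast
    have "F \<inter> D = {}" using Ff(2) FS by blast
    then obtain G where G: "G \<in> ?M" "F \<subseteq> G" using exists_maxface[OF fin FC] by blast
    have GC: "G face_of ?C" using G(1) unfolding maximal_disjoint_faces_def by auto
    have GD: "G \<inter> D = {}" using G(1) unfolding maximal_disjoint_faces_def by auto
    have "(G \<inter> S) face_of ?C" using face_of_Int[OF GC S] .
    hence "(G \<inter> S) face_of S" using face_of_subset SC by blast
    moreover have "(G \<inter> S) \<inter> (D \<inter> S) = {}" using GD by blast
    moreover have "F \<subseteq> G \<inter> S" using G(2) FS by blast
    ultimately have "G \<inter> S = F" using Fmax by blast
    thus ?thesis using G(1) by blast
  qed
  have b: "G \<inter> S \<subseteq> \<Union>?M'" if G: "G \<in> ?M" for G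
  proof -
    have GC: "G face_of ?C" using G unfolding maximal_disjoint_faces_def by auto
    have GD: "G \<inter> D = {}" using G unfolding maximal_disjoint_faces_def by auto
    have "(G \<inter> S) face_of ?C" using face_of_Int[OF GC S] .
    hence "(G \<inter> S) face_of S" using face_of_subset[of "G \<inter> S" ?C S] SC by blast
    hence "(G \<inter> S) face_of convex hull (P \<inter> S)" using hS by simp
    moreover have "(G \<inter> S) \<inter> (D \<inter> S) = {}" using GD by blast
    ultimately obtain F where "F \<in> ?M'" "G \<inter> S \<subseteq> F" using exists_maxface[OF finS] by blast
    thus ?thesis by blast
  qed
  have U: "\<Union>?M' = S \<inter> \<Union>?M"
  proof
    show "\<Union>?M' \<subseteq> S \<inter> \<Union>?M" using a by blast
    show "S \<inter> \<Union>?M \<subseteq> \<Union>?M'" using b by blast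
  qed
  have dis': "\<forall>G\<in>?M'. \<forall>G'\<in>?M'. G \<noteq> G' \<longrightarrow> G \<inter> G' = {}"
  proof (intro ballI impI)
    fix F1 F2 assume F: "F1 \<in> ?M'" "F2 \<in> ?M'" "F1 \<noteq> F2"
    obtain G1 where G1: "G1 \<in> ?M" "F1 = G1 \<inter> S" using a F(1) by blast
    obtain G2 where G2: "G2 \<in> ?M" "F2 = G2 \<inter> S" using a F(2) by blast
    have "G1 \<noteq> G2" using F(3) G1 G2 by blast
    hence "G1 \<inter> G2 = {}" using Dis G1 G2 by blast
    thus "F1 \<inter> F2 = {}" using G1 G2 by blast
  qed
  have hsub: "convex hull (P - \<Union>?M) \<subseteq> ?C" by (rule hull_mono) blast
  have eq: "D \<inter> S = convex hull ((P \<inter> S) - \<Union>?M')"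
  proof -
    have "D \<inter> S = convex hull (P - \<Union>?M) \<inter> S"
      using Deq by (rule arg_cong[where f="\<lambda>X. X \<inter> S"])
    also have "\<dots> = convex hull ((P - \<Union>?M) \<inter> S)"
      by (rule hull_Int_face[OF _ S hsub]) (use fin in blast)
    also have "(P - \<Union>?M) \<inter> S = (P \<inter> S) - \<Union>?M'" using U by blast
    finally show ?thesis .
  qed
  have ex: "\<exists>V. V \<subseteq> P \<inter> S \<and> D \<inter> S = convex hull V"
    by (rule exI[of _ "(P \<inter> S) - \<Union>?M'"]) (use eq in blast)
  show ?thesis by (rule daughter_polytopeI[OF ne ex dis' eq])
qed

theorem mainTheorem7:
  fixes P :: "(real^'n) set" and D :: "'n \<Rightarrow> (real^'n) set" and S :: "(real^'n) set"
  assumes "finite P" and "P \<subseteq> lattice_points"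
    and "semi_interlaced P UNIV D"
    and "suture P UNIV D S"
  shows "int (card {i. D i \<inter> S \<noteq> {}}) = aff_dim S
    \<and> semi_interlaced (P \<inter> S) {i. D i \<inter> S \<noteq> {}} (\<lambda>i. D i \<inter> S)"
proof -
  have S: "S face_of convex hull P"
    by (rule conjunct1[OF assms(4)[unfolded suture_def]])
  have c: "int (card {i. D i \<inter> S \<noteq> {}}) = aff_dim S"
    using conjunct2[OF assms(4)[unfolded suture_def]] by simp
  have dp: "daughter_polytope P (D i)" for i
    using conjunct1[OF assms(3)[unfolded semi_interlaced_def]] by simp
  have cnt: "aff_dim F \<le> int (card {i. D i \<inter> F \<noteq> {}})" if "F face_of convex hull P" for F
    using conjunct2[OF assms(3)[unfolded semi_interlaced_def]] that by simp
  have hS: "convex hull (P \<inter> S) = S"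
    using face_hull_pts[OF assms(1) S] by (metis Int_commute)
  have part2: "aff_dim F \<le> int (card {i \<in> {i. D i \<inter> S \<noteq> {}}. D i \<inter> S \<inter> F \<noteq> {}})"
    if F: "F face_of convex hull (P \<inter> S)" for F
  proof -
    have FS: "F face_of S" using F unfolding hS .
    have FC: "F face_of convex hull P" using face_of_trans[OF FS S] .
    have sub: "F \<subseteq> S" using FS face_of_imp_subset by blast
    have eq: "{i \<in> {i. D i \<inter> S \<noteq> {}}. D i \<inter> S \<inter> F \<noteq> {}} = {i. D i \<inter> F \<noteq> {}}"
      using sub by auto
    show ?thesis unfolding eq by (rule cnt[OF FC])
  qed
  have d2: "\<forall>i\<in>{i. D i \<inter> S \<noteq> {}}. daughter_polytope (P \<inter> S) (D i \<inter> S)"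
  proof
    fix i assume "i \<in> {i. D i \<inter> S \<noteq> {}}"
    thus "daughter_polytope (P \<inter> S) (D i \<inter> S)"
      using daughter_restrict[OF assms(1) dp S] by simp
  qed
  have p2: "\<forall>F. F face_of convex hull (P \<inter> S) \<longrightarrow> aff_dim F \<le> int (card {i \<in> {i. D i \<inter> S \<noteq> {}}. D i \<inter> S \<inter> F \<noteq> {}})"
    using part2 by simp
  show ?thesis
    unfolding semi_interlaced_def
    apply (intro conjI)
      apply (rule c)
     apply (rule d2)
    apply (rule p2)
    done
qed

end
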